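(* Let $A,L,\ddot L,G,\langle A_G\mid R_G\rangle,X=A\cup A_G,\mathsf f,\check{\mathsf f}$ be as in the context, and let $T$ be the semigroup defined by the presentation $\langle X\mid R_G\cup R_{\mathsf f}\rangle$. Then for every word $w\in X^+$, $w=\check{\mathsf f}(w)$ holds in $T$.
   Context: Let $A$ be an alphabet; for $w=a_1\cdots a_n\in A^+$, $w[p,q]=a_p\cdots a_q$, $w_\alpha=w[1,n-1]$, $w_\omega=w[2,n]$. $L\subseteq A^+$ is a non-empty factorial language (closed under non-empty factors) with $A\subseteq L$, $L^1=L\cup\{1\}$, and $\ddot L=\{v\in A^+: v\notin L,\ v_\alpha,v_\omega\in L\}$. For $w\in L$, $\mathrm{sc}_L[w]=(w)$; for $w\notin L$, letting $w[p_1,q_1],\dots,w[p_m,q_m]$ be all occurrences in $w$ of factors in $\ddot L$ from left to right, $\ddot w_i=w[p_i,q_i]$, $w_0=w[1,q_1-1]$, $w_m=w[p_m+1,n]$, $w_i=w[p_i+1,q_{i+1}-1]$ ($0<i<m$), and $\mathrm{sc}_L[w]=(w_0,\ddot w_1,w_1,\dots,\ddot w_m,w_m)$. $G$ is a group with semigroup presentation $\langle A_G\mid R_G\rangle$, $A_G\cap A=\emptyset$; each $g\in G$ is identified with a fixed word of $A_G^+$ representing it, and $e$ denotes the fixed word representing $1_G$. $X=A\cup A_G$, $\mathsf f:L\cup\ddot L\to G$ is a function, and $R_{\mathsf f}$ consists of the relations $eue=\mathsf f(u)$ for $u\in L$ and $\ddot v=\ddot v_\alpha\,\mathsf f(\ddot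 v)\,\ddot v_\omega$ for $\ddot v\in\ddot L$ (elements of $G$ written as their fixed representative words). $\hat{\mathsf f}:A^*\to G$: $\hat{\mathsf f}(1)=1_G$, $\hat{\mathsf f}(w)=\mathsf f(w)$ for $w\in L$, else $\hat{\mathsf f}(w)=\mathsf f(w_0)\mathsf f(\ddot w_1)\mathsf f(w_1)\cdots\mathsf f(\ddot w_m)\mathsf f(w_m)$. For $w\in A^+$: $\check{\mathsf f}(w)=w$ if $w\in L$, else $\check{\mathsf f}(w)=w_0\,g_w\,w_m$ with $g_w=\mathsf f(\ddot w_1)\mathsf f(w_1)\cdots\mathsf f(w_{m-1})\mathsf f(\ddot w_m)$. For $u\in A^*$: $\grave{\mathsf f}(u)=\acute{\mathsf f}(u)=u$ if $u\in L^1$; otherwise $\grave{\mathsf f}(u)=u_0(g_u\mathsf f(u_m))$, $\acute{\mathsf f}(u)=(\mathsf f(u_0)g_u)u_m$. For $w=u_0g_1u_1\cdots g_nu_n\in X^+\setminus A^+$ ($u_0,u_n\in A^*$, $u_1,\dots,u_{n-1}\in A^+$, $g_i\in A_G^+$): $\check{\mathsf f}(w)=\grave{\mathsf f}(u_0)g_1\hat{\mathsf f}(u_1)\cdots\hat{\mathsf f}(u_{n-1})g_n\acute{\mathsf f}(u_n)$, with adjacent group factors multiplied in $G$ and replaced by the fixed representative of the product. *)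

theory Defs
  imports Main
begin

text \<open>Words are lists; the alphabet A is the type 'a, the group alphabet A_G is the
type 'b, and X = A \<union> A_G is the disjoint sum 'a + 'b (Inl = letters of A,
Inr = letters of A_G).  Positions are 0-based.\<close>

definition step :: "('c list \<times> 'c list) set \<Rightarrow> ('c list \<times> 'c list) set" where
  "step R = {(x @ l @ y, x @ r @ y) | x l r y. (l, r) \<in> R}"

definition pres_eq :: "('c list \<times> 'c list) set \<Rightarrow> ('c list \<times> 'c list) set" where
  "pres_eq R = (step R \<union> (step R)\<inverse>)\<^sup>*"

definition group_presentation :: "('b list \<times> 'b list) set \<Rightarrow> bool" where
  "group_presentation RG \<longleftrightarrow>
     (\<forall>(l, r) \<in> RG. l \<noteq> [] \<and> r \<noteq> []) \<and>
     (\<exists>i. i \<noteq> [] \<and> (\<forall>w. w \<noteq> [] \<longrightarrow>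
        (i @ w, w) \<in> pres_eq RG \<and> (w @ i, w) \<in> pres_eq RG \<and>
        (\<exists>v. v \<noteq> [] \<and> (w @ v, i) \<in> pres_eq RG \<and> (v @ w, i) \<in> pres_eq RG)))"

definition fixed_reps :: "('b list \<times> 'b list) set \<Rightarrow> ('b list \<Rightarrow> 'b list) \<Rightarrow> bool" where
  "fixed_reps RG rep \<longleftrightarrow>
     (\<forall>w. w \<noteq> [] \<longrightarrow> rep w \<noteq> [] \<and> (rep w, w) \<in> pres_eq RG) \<and>
     (\<forall>w v. w \<noteq> [] \<longrightarrow> v \<noteq> [] \<longrightarrow> (w, v) \<in> pres_eq RG \<longrightarrow> rep w = rep v)"

text \<open>The elements of G, as their fixed representative words.\<close>
definition Gelems :: "('b list \<Rightarrow> 'b list) \<Rightarrow> 'b list set" where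
  "Gelems rep = rep ` {w. w \<noteq> []}"

definition is_identity :: "('b list \<times> 'b list) set \<Rightarrow> 'b list \<Rightarrow> bool" where
  "is_identity RG e \<longleftrightarrow> e \<noteq> [] \<and>
     (\<forall>w. w \<noteq> [] \<longrightarrow> (e @ w, w) \<in> pres_eq RG \<and> (w @ e, w) \<in> pres_eq RG)"

definition factorial_lang :: "'a list set \<Rightarrow> bool" where
  "factorial_lang L \<longleftrightarrow> (\<forall>w\<in>L. w \<noteq> []) \<and>
     (\<forall>w\<in>L. \<forall>x y z. w = x @ y @ z \<longrightarrow> y \<noteq> [] \<longrightarrow> y \<in> L)"

definition ddotL :: "'a list set \<Rightarrow> 'a list set" where
  "ddotL L = {v. v \<noteq> [] \<and> v \<notin> L \<and> butlast v \<in> L \<and> tl v \<in> L}"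

text \<open>factor w p q = w[p,q] (0-based, inclusive).\<close>
definition factor :: "'a list \<Rightarrow> nat \<Rightarrow> nat \<Rightarrow> 'a list" where
  "factor w p q = take (Suc q - p) (drop p w)"

definition occs :: "'a list set \<Rightarrow> 'a list \<Rightarrow> (nat \<times> nat) list" where
  "occs L w = [(p, q). p \<leftarrow> [0..<length w], q \<leftarrow> [p..<length w], factor w p q \<in> ddotL L]"

text \<open>sc_L[w] = (w_0, dd_1, w_1, ..., dd_m, w_m) as a list.\<close>
definition sc :: "'a list set \<Rightarrow> 'a list \<Rightarrow> 'a list list" where
  "sc L w = (if w \<in> L then [w] else
     (let oc = occs L w; m = length oc in
       take (snd (oc ! 0)) w #
       concat (map (\<lambda>i. [factor w (fst (oc ! i)) (snd (oc ! i)),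
                          (if Suc i < m
                           then take (snd (oc ! Suc i) - fst (oc ! i) - 1) (drop (Suc (fst (oc ! i))) w)
                           else drop (Suc (fst (oc ! i))) w)]) [0..<m])))"

text \<open>Products in G are computed as the fixed representative of the concatenation.\<close>
definition hatf :: "'a list set \<Rightarrow> ('b list \<Rightarrow> 'b list) \<Rightarrow> 'b list \<Rightarrow> ('a list \<Rightarrow> 'b list)
                    \<Rightarrow> 'a list \<Rightarrow> 'b list" where
  "hatf L rep e f u = (if u = [] then e else if u \<in> L then f u
                       else rep (concat (map f (sc L u))))"

definition gw :: "'a list set \<Rightarrow> ('b list \<Rightarrow> 'b list) \<Rightarrow> ('a list \<Rightarrow> 'b list) \<Rightarrow> 'a list \<Rightarrow> 'b list" where
  "gw L rep f w = rep (concat (map f (butlast (tl (sc L w)))))"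

definition checkA :: "'a list set \<Rightarrow> ('b list \<Rightarrow> 'b list) \<Rightarrow> ('a list \<Rightarrow> 'b list)
                      \<Rightarrow> 'a list \<Rightarrow> ('a + 'b) list" where
  "checkA L rep f w = (if w \<in> L then map Inl w
     else map Inl (hd (sc L w)) @ map Inr (gw L rep f w) @ map Inl (last (sc L w)))"

text \<open>Items: Inl a is a letter of A, Inr g a group factor (a word over A_G).\<close>
definition grave :: "'a list set \<Rightarrow> ('b list \<Rightarrow> 'b list) \<Rightarrow> ('a list \<Rightarrow> 'b list)
                     \<Rightarrow> 'a list \<Rightarrow> ('a + 'b list) list" where
  "grave L rep f u = (if u = [] \<or> u \<in> L then map Inl u
     else map Inl (hd (sc L u)) @ [Inr (rep (gw L rep f u @ f (last (sc L u))))])"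

definition acute :: "'a list set \<Rightarrow> ('b list \<Rightarrow> 'b list) \<Rightarrow> ('a list \<Rightarrow> 'b list)
                     \<Rightarrow> 'a list \<Rightarrow> ('a + 'b list) list" where
  "acute L rep f u = (if u = [] \<or> u \<in> L then map Inl u
     else [Inr (rep (f (hd (sc L u)) @ gw L rep f u))] @ map Inl (last (sc L u)))"

fun merge :: "('b list \<Rightarrow> 'b list) \<Rightarrow> ('a + 'b list) list \<Rightarrow> ('a + 'b list) list" where
  "merge rep [] = []"
| "merge rep (Inr g # Inr h # xs) = merge rep (Inr (rep (g @ h)) # xs)"
| "merge rep (x # xs) = x # merge rep xs"

definition flatten :: "('a + 'b list) list \<Rightarrow> ('a + 'b) list" where
  "flatten xs = concat (map (case_sum (\<lambda>a. [Inl a]) (\<lambda>g. map Inr g)) xs)"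

text \<open>Decomposition of a word starting with a letter of A_G (or empty) into
 (g_1,u_1),...,(g_n,u_n) with g_i maximal blocks of A_G letters.\<close>
function segs :: "('a + 'b) list \<Rightarrow> ('b list \<times> 'a list) list" where
  "segs [] = []"
| "segs (x # xs) =
     (let r = dropWhile (Not \<circ> isl) (x # xs) in
      (map projr (takeWhile (Not \<circ> isl) (x # xs)), map projl (takeWhile isl r))
        # segs (dropWhile isl r))"
  by pat_completeness auto
termination
  apply (relation "measure length")
   apply simp
  subgoal for x xs r
    using length_dropWhile_le[of isl "dropWhile (Not \<circ> isl) xs"]
          length_dropWhile_le[of "Not \<circ> isl" xs] length_dropWhile_le[of isl xs]
    by (cases "isl x") (auto simp: Let_def)
  done

text \<open>check f on X^+: for w = u_0 g_1 u_1 ... g_n u_n.\<close>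
definition checkX :: "'a list set \<Rightarrow> ('b list \<Rightarrow> 'b list) \<Rightarrow> 'b list \<Rightarrow> ('a list \<Rightarrow> 'b list)
                      \<Rightarrow> ('a + 'b) list \<Rightarrow> ('a + 'b) list" where
  "checkX L rep e f w = (if \<forall>x\<in>set w. isl x then checkA L rep f (map projl w) else
     (let u0 = map projl (takeWhile isl w); sg = segs (dropWhile isl w); n = length sg in
      flatten (merge rep
        (grave L rep f u0 @
         concat (map (\<lambda>i. [Inr (fst (sg ! i))] @
                          (if Suc i < n then [Inr (hatf L rep e f (snd (sg ! i)))] else [])) [0..<n]) @
         acute L rep f (snd (last sg))))))"

definition RG_X :: "('b list \<times> 'b list) set \<Rightarrow> (('a + 'b) list \<times> ('a + 'b) list) set" where
  "RG_X RG = {(map Inr l, map Inr r) | l r. (l, r) \<in> RG}"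

definition Rf :: "'a list set \<Rightarrow> ('a list \<Rightarrow> 'b list) \<Rightarrow> 'b list
                  \<Rightarrow> (('a + 'b) list \<times> ('a + 'b) list) set" where
  "Rf L f e =
     {(map Inr e @ map Inl u @ map Inr e, map Inr (f u)) | u. u \<in> L} \<union>
     {(map Inl v, map Inl (butlast v) @ map Inr (f v) @ map Inl (tl v)) | v. v \<in> ddotL L}"

end

theory Submission
  imports Defs "HOL-Library.Product_Lexorder"
begin


lemma pe_refl: "(a, a) \<in> pres_eq R"
  unfolding pres_eq_def by simp

lemma pe_sym: "(a, b) \<in> pres_eq R \<Longrightarrow> (b, a) \<in> pres_eq R"
proof -
  have "sym ((step R \<union> (step R)\<inverse>)\<^sup>*)"
    by (rule sym_rtrancl) (auto simp: sym_def)
  then show "(a, b) \<in> pres_eq R \<Longrightarrow> (b, a) \<in> pres_eq R"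
    unfolding pres_eq_def by (auto simp: sym_def)
qed

lemma pe_trans: "(a, b) \<in> pres_eq R \<Longrightarrow> (b, c) \<in> pres_eq R \<Longrightarrow> (a, c) \<in> pres_eq R"
  unfolding pres_eq_def by (rule rtrancl_trans)

lemma pe_base: "(l, r) \<in> R \<Longrightarrow> (l, r) \<in> pres_eq R"
proof -
  assume "(l, r) \<in> R"
  then have "([] @ l @ [], [] @ r @ []) \<in> step R" unfolding step_def by blast
  then show ?thesis unfolding pres_eq_def by auto
qed

lemma step_cong: "(a, b) \<in> step R \<Longrightarrow> (x @ a @ y, x @ b @ y) \<in> step R"
  unfolding step_def by auto (metis append.assoc)

lemma pe_cong: "(a, b) \<in> pres_eq R \<Longrightarrow> (x @ a @ y, x @ b @ y) \<in> pres_eq R"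
  unfolding pres_eq_def
proof (induction rule: rtrancl_induct)
  case base then show ?case by simp
next
  case (step b c)
  then have "(x @ b @ y, x @ c @ y) \<in> step R \<union> (step R)\<inverse>"
    using step_cong by blast
  with step.IH show ?case by (rule rtrancl_into_rtrancl)
qed

lemma pe_mono: "R \<subseteq> R' \<Longrightarrow> (a, b) \<in> pres_eq R \<Longrightarrow> (a, b) \<in> pres_eq R'"
proof -
  assume "R \<subseteq> R'"
  then have "step R \<subseteq> step R'" unfolding step_def by blast
  then have "(step R \<union> (step R)\<inverse>) \<subseteq> (step R' \<union> (step R')\<inverse>)" by blast
  then show "(a, b) \<in> pres_eq R \<Longrightarrow> (a, b) \<in> pres_eq R'"
    unfolding pres_eq_def using rtrancl_mono by blast
qed

lemma step_map: "(a, b) \<in> step RG \<Longrightarrow> (map Inr a, map Inr b) \<in> step (RG_X RG)"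
  unfolding step_def RG_X_def by auto (metis map_append)

lemma pe_map: "(a, b) \<in> pres_eq RG \<Longrightarrow> (map Inr a, map Inr b) \<in> pres_eq (RG_X RG)"
  unfolding pres_eq_def
proof (induction rule: rtrancl_induct)
  case base then show ?case by simp
next
  case (step b c)
  then have "(map Inr b, map Inr c) \<in> step (RG_X RG) \<union> (step (RG_X RG))\<inverse>"
    using step_map by blast
  with step.IH show ?case by (rule rtrancl_into_rtrancl)
qed



lemma fac_L: "factorial_lang L \<Longrightarrow> x @ y @ z \<in> L \<Longrightarrow> y \<noteq> [] \<Longrightarrow> y \<in> L"
  unfolding factorial_lang_def by blast

lemma ddot_fac:
  assumes "factorial_lang L" "v \<in> ddotL L" "v = x @ y @ z" "y \<noteq> []" "x \<noteq> [] \<or> z \<noteq> []"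
  shows "y \<in> L"
proof (cases "x \<noteq> []")
  case True
  then have "tl v = tl x @ y @ z" using assms(3) by simp
  moreover have "tl v \<in> L" using assms(2) unfolding ddotL_def by simp
  ultimately show ?thesis using fac_L[OF assms(1)] assms(4) by metis
next
  case False
  then have "z \<noteq> []" using assms(5) by simp
  then have "butlast v = x @ y @ butlast z" using assms(3) by (simp add: butlast_append)
  moreover have "butlast v \<in> L" using assms(2) unfolding ddotL_def by simp
  ultimately show ?thesis using fac_L[OF assms(1)] assms(4) by metis
qed

lemma ddot_notL: "v \<in> ddotL L \<Longrightarrow> v \<notin> L"
  unfolding ddotL_def by simp

lemma ddot_len: "\<forall>a. [a] \<in> L \<Longrightarrow> v \<in> ddotL L \<Longrightarrow> 2 \<le> length v"
  unfolding ddotL_def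
  by (cases v; cases "tl v") auto

lemma length_factor: "p \<le> q \<Longrightarrow> q < length u \<Longrightarrow> length (factor u p q) = Suc q - p"
  unfolding factor_def by simp

lemma factor_split: "p \<le> q \<Longrightarrow> q < length u \<Longrightarrow> u = take p u @ factor u p q @ drop (Suc q) u"
proof -
  assume a: "p \<le> q" "q < length u"
  have d: "drop (Suc q - p) (drop p u) = drop (Suc q) u" using a by simp
  have "u = take p u @ drop p u" by simp
  also have "drop p u = take (Suc q - p) (drop p u) @ drop (Suc q - p) (drop p u)"
    by (rule append_take_drop_id[symmetric])
  finally show ?thesis unfolding factor_def d by simp
qed

lemma factor_factor: "i \<le> j \<Longrightarrow> j \<le> b - a \<Longrightarrow> a \<le> b \<Longrightarrow>
   factor (factor u a b) i j = factor u (a + i) (a + j)"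
  unfolding factor_def by (simp add: drop_take min_def add.commute)

lemma factor_whole: "v \<noteq> [] \<Longrightarrow> factor v 0 (length v - 1) = v"
  unfolding factor_def by simp

lemma exists_occ:
  assumes "\<forall>a. [a] \<in> L" 
  shows "v \<noteq> [] \<Longrightarrow> v \<notin> L \<Longrightarrow> \<exists>p q. p \<le> q \<and> q < length v \<and> factor v p q \<in> ddotL L"
proof (induction v rule: length_induct)
  case (1 v)
  have len: "2 \<le> length v"
    using 1(2,3) assms by (cases v; cases "tl v") auto
  show ?case
  proof (cases "butlast v \<in> L \<and> tl v \<in> L")
    case True
    then have "v \<in> ddotL L" using 1 unfolding ddotL_def by simp
    then show ?thesis using factor_whole[of v] 1(2)
      by (intro exI[of _ 0] exI[of _ "length v - 1"]) auto
  next
    case False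
    show ?thesis
    proof (cases "butlast v \<in> L")
      case False
      have "butlast v \<noteq> []" using len by (cases v rule: rev_cases) auto
      then obtain p q where pq: "p \<le> q" "q < length (butlast v)" "factor (butlast v) p q \<in> ddotL L"
        using 1(1)[rule_format, of "butlast v"] False len \<open>butlast v \<noteq> []\<close> by force
      have "factor (butlast v) p q = factor v p q"
        using pq(1,2) len unfolding factor_def by (auto simp: butlast_conv_take take_drop min_def split: if_splits)
      then show ?thesis using pq by (intro exI[of _ p] exI[of _ q]) auto
    next
      case True
      with False have tl: "tl v \<notin> L" by simp
      have "tl v \<noteq> []" using len by (cases v) auto
      then obtain p q where pq: "p \<le> q" "q < length (tl v)" "factor (tl v) p q \<in> ddotL L"
        using 1(1)[rule_format, of "tl v"] tl len \<open>tl v \<noteq> []\<close> by force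
      have "factor (tl v) p q = factor v (Suc p) (Suc q)"
        unfolding factor_def by (simp add: drop_Suc)
      then show ?thesis using pq by (intro exI[of _ "Suc p"] exI[of _ "Suc q"]) auto
    qed
  qed
qed

lemma no_occ_L:
  assumes "\<forall>a. [a] \<in> L" "a \<le> b" "b < length u"
    and "\<forall>p q. a \<le> p \<longrightarrow> p \<le> q \<longrightarrow> q \<le> b \<longrightarrow> factor u p q \<notin> ddotL L"
  shows "factor u a b \<in> L"
proof (rule ccontr)
  assume "factor u a b \<notin> L"
  moreover have "factor u a b \<noteq> []" using assms(2,3) length_factor[of a b u] by auto
  ultimately obtain p q where pq: "p \<le> q" "q < length (factor u a b)" "factor (factor u a b) p q \<in> ddotL L"
    using exists_occ[OF assms(1)] by blast
  have "q \<le> b - a" using pq(2) length_factor[of a b u] assms(2,3) by simp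
  then have "factor (factor u a b) p q = factor u (a + p) (a + q)"
    using factor_factor pq(1) assms(2) by blast
  moreover have "a + q \<le> b" using \<open>q \<le> b - a\<close> assms(2) by simp
  ultimately show False using assms(4)[rule_format, of "a + p" "a + q"] pq(1,3) by simp
qed

lemma occ_contain:
  assumes "factorial_lang L" "p \<le> p'" "p' \<le> q'" "q' \<le> q" "q < length u"
    "factor u p q \<in> ddotL L" "factor u p' q' \<in> ddotL L"
  shows "p = p' \<and> q = q'"
proof -
  define v where "v = factor u p q"
  have "p \<le> q" using assms by simp
  have lv: "length v = Suc q - p" unfolding v_def by (rule length_factor[OF \<open>p \<le> q\<close> assms(5)])
  have y: "factor v (p' - p) (q' - p) = factor u p' q'"
    unfolding v_def using factor_factor[of "p' - p" "q' - p" q p u] assms by simp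
  have sp: "v = take (p' - p) v @ factor v (p' - p) (q' - p) @ drop (Suc (q' - p)) v"
    using factor_split[of "p' - p" "q' - p" v] assms lv by simp
  have "take (p' - p) v = [] \<and> drop (Suc (q' - p)) v = []"
  proof (rule ccontr)
    assume "\<not> ?thesis"
    then have "factor u p' q' \<in> L"
      using ddot_fac[OF assms(1), of v "take (p' - p) v" "factor v (p' - p) (q' - p)" "drop (Suc (q' - p)) v"]
        sp y assms(6,7) v_def unfolding ddotL_def by auto
    then show False using assms(7) unfolding ddotL_def by simp
  qed
  then show ?thesis using lv assms by auto
qed



lemma concat_if_single: "concat (map (\<lambda>q. if P q then [g q] else []) xs) = map g (filter P xs)"
  by (induction xs) auto

lemma sorted_wrt_concat_map:
  assumes "sorted_wrt Q xs" "\<And>x. x \<in> set xs \<Longrightarrow> sorted_wrt R (F x)"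
    "\<And>x y a b. x \<in> set xs \<Longrightarrow> y \<in> set xs \<Longrightarrow> Q x y \<Longrightarrow> a \<in> set (F x) \<Longrightarrow> b \<in> set (F y) \<Longrightarrow> R a b"
  shows "sorted_wrt R (concat (map F xs))"
  using assms
proof (induction xs)
  case Nil then show ?case by simp
next
  case (Cons x xs)
  have "sorted_wrt R (concat (map F xs))" 
    apply (rule Cons.IH)
    using Cons.prems(1) apply simp
    using Cons.prems(2) apply simp
    using Cons.prems(3) by (meson list.set_intros(2))
  moreover have "\<forall>a\<in>set (F x). \<forall>b\<in>set (concat (map F xs)). R a b"
  proof (intro ballI)
    fix a b assume "a \<in> set (F x)" "b \<in> set (concat (map F xs))"
    then obtain y where "y \<in> set xs" "b \<in> set (F y)" by auto
    then show "R a b" using Cons.prems(1) Cons.prems(3)[of x y a b] \<open>a \<in> set (F x)\<close> by simp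
  qed
  ultimately show ?case using Cons.prems by (simp add: sorted_wrt_append)
qed

lemma occs_alt: "occs L u = concat (map (\<lambda>p. map (\<lambda>q. (p, q)) (filter (\<lambda>q. factor u p q \<in> ddotL L) [p..<length u])) [0..<length u])"
  unfolding occs_def by (simp add: concat_if_single)

lemma set_occs: "set (occs L u) = {(p, q). p \<le> q \<and> q < length u \<and> factor u p q \<in> ddotL L}"
  unfolding occs_alt by force

lemma sorted_occs: "sorted_wrt (<) (occs L u)"
  unfolding occs_alt
  apply (rule sorted_wrt_concat_map[where Q="(<)"])
    apply (simp add: sorted_wrt_upt)
   apply (simp add: sorted_wrt_map less_prod_def)
   apply (rule sorted_wrt_filter)
   apply simp
  apply (auto simp: less_prod_def)
  done

lemma sorted_nth_less_rev:
  fixes xs :: "('c::linorder) list"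
  assumes "sorted_wrt (<) xs" "i < length xs" "j < length xs" "xs ! i < xs ! j"
  shows "i < j"
proof (rule ccontr)
  assume "\<not> i < j"
  then consider "j < i" | "i = j" by linarith
  then show False
  proof cases
    case 1 then have "xs ! j < xs ! i" using sorted_wrt_nth_less assms by blast
    then show False using assms(4) by simp
  next
    case 2 then show False using assms(4) by simp
  qed
qed



locale occ_ctx =
  fixes L :: "'a list set" and u :: "'a list"
  assumes fl: "factorial_lang L" and sing: "\<forall>a. [a] \<in> L" and uL: "u \<notin> L" and une: "u \<noteq> []"
begin

definition P where "P i = fst (occs L u ! i)"
definition Q where "Q i = snd (occs L u ! i)"
definition D where "D i = factor u (P i) (Q i)"
definition W where "W i = take (Q (Suc i) - P i - 1) (drop (Suc (P i)) u)"
definition Wx where "Wx i = (if Suc i < length (occs L u) then W i else drop (Suc (P i)) u)"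
definition Ls where "Ls k = concat (map (\<lambda>i. [D i, W i]) [0..<k]) @ [D k]"

abbreviation "mm \<equiv> length (occs L u)"

lemma oc_nth: "occs L u ! i = (P i, Q i)"
  unfolding P_def Q_def by simp

lemma m_pos: "0 < mm"
proof -
  obtain p q where "p \<le> q" "q < length u" "factor u p q \<in> ddotL L"
    using exists_occ[OF sing une uL] by blast
  then have "(p, q) \<in> set (occs L u)" by (simp add: set_occs)
  then show ?thesis by (cases "occs L u") auto
qed

lemma occ: assumes "i < mm" shows "P i < Q i" "Q i < length u" "factor u (P i) (Q i) \<in> ddotL L"
proof -
  have "(P i, Q i) \<in> set (occs L u)" using assms oc_nth by (metis nth_mem)
  then have a: "P i \<le> Q i" "Q i < length u" "factor u (P i) (Q i) \<in> ddotL L" by (auto simp: set_occs)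
  then show "Q i < length u" "factor u (P i) (Q i) \<in> ddotL L" by auto
  have "2 \<le> length (factor u (P i) (Q i))" using ddot_len[OF sing a(3)] .
  then show "P i < Q i" using length_factor[OF a(1,2)] by simp
qed

lemma occ_in: assumes "p \<le> q" "q < length u" "factor u p q \<in> ddotL L"
  obtains j where "j < mm" "P j = p" "Q j = q"
proof -
  have "(p, q) \<in> set (occs L u)" using assms by (simp add: set_occs)
  then obtain j where "j < mm" "occs L u ! j = (p, q)" by (metis in_set_conv_nth)
  then show ?thesis using that oc_nth by simp
qed

lemma idx_less: "i < mm \<Longrightarrow> j < mm \<Longrightarrow> (P i, Q i) < (P j, Q j) \<Longrightarrow> i < j"
  using sorted_nth_less_rev[OF sorted_occs, of i L u j] oc_nth by simp

lemma nth_lt: "i < j \<Longrightarrow> j < mm \<Longrightarrow> (P i, Q i) < (P j, Q j)"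
  using sorted_wrt_nth_less[OF sorted_occs, of i j L u] oc_nth by simp

lemma occ_contain': assumes "i < mm" "P i \<le> p'" "p' \<le> q'" "q' \<le> Q i" "factor u p' q' \<in> ddotL L"
  shows "P i = p' \<and> Q i = q'"
  using occ_contain[OF fl assms(2) assms(3) assms(4) occ(2)[OF assms(1)] occ(3)[OF assms(1)] assms(5)] .

lemma mono: assumes "Suc i < mm" shows "P i < P (Suc i)" "Q i < Q (Suc i)"
proof -
  have i: "i < mm" using assms by simp
  have lt: "(P i, Q i) < (P (Suc i), Q (Suc i))" using nth_lt assms by simp
  show pl: "P i < P (Suc i)"
  proof (rule ccontr)
    assume "\<not> P i < P (Suc i)"
    then have a: "P i = P (Suc i)" "Q i < Q (Suc i)" using lt by (auto simp: less_prod_def)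
    have "P (Suc i) \<le> P i" "P i \<le> Q i" "Q i \<le> Q (Suc i)" using a occ(1)[OF i] by auto
    then have "Q (Suc i) = Q i" using occ_contain'[OF assms _ _ _ occ(3)[OF i]] by blast
    then show False using a by simp
  qed
  show "Q i < Q (Suc i)"
  proof (rule ccontr)
    assume "\<not> Q i < Q (Suc i)"
    then have "P i \<le> P (Suc i)" "P (Suc i) \<le> Q (Suc i)" "Q (Suc i) \<le> Q i"
      using pl occ(1)[OF assms] by auto
    then have "P i = P (Suc i)" using occ_contain'[OF i _ _ _ occ(3)[OF assms]] by blast
    then show False using pl by simp
  qed
qed

lemma no_between: assumes "Suc i < mm" "P i < p" "p \<le> q" "q < Q (Suc i)" "factor u p q \<in> ddotL L"
  shows False
proof -
  have ql: "q < length u" using assms(4) occ(2)[OF assms(1)] by simp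
  obtain j where j: "j < mm" "P j = p" "Q j = q" using occ_in[OF assms(3) ql assms(5)] by blast
  show False
  proof (cases "p \<le> P (Suc i)")
    case True
    have "(P i, Q i) < (P j, Q j)" using j assms(2) by (simp add: less_prod_def)
    then have "i < j" using idx_less[of i j] j assms(1) by simp
    moreover have "(P j, Q j) < (P (Suc i), Q (Suc i))" using j True assms(4) by (auto simp: less_prod_def)
    then have "j < Suc i" using idx_less[of j "Suc i"] j assms(1) by simp
    ultimately show False by simp
  next
    case False
    then have "P (Suc i) \<le> p" "q \<le> Q (Suc i)" using assms(4) by auto
    then have "P (Suc i) = p" using occ_contain'[OF assms(1) _ assms(3) _ assms(5)] by blast
    then show False using False by simp
  qed
qed

lemma no_after: assumes "P (mm - 1) < p" "p \<le> q" "q < length u" "factor u p q \<in> ddotL L"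
  shows False
proof -
  obtain j where j: "j < mm" "P j = p" "Q j = q" using occ_in[OF assms(2,3,4)] by blast
  have "mm - 1 < j" using idx_less[of "mm - 1" j] j assms m_pos by (simp add: less_prod_def)
  then show False using j by simp
qed

lemma no_before: assumes "p \<le> q" "q < Q 0" "factor u p q \<in> ddotL L"
  shows False
proof -
  note o0 = occ[of 0, OF m_pos]
  have "q < length u" using assms(2) o0(2) by simp
  then obtain j where j: "j < mm" "P j = p" "Q j = q" using occ_in[OF assms(1) _ assms(3)] by blast
  show False
  proof (cases j)
    case 0 then show False using j assms by simp
  next
    case (Suc k)
    have "(P 0, Q 0) < (P j, Q j)" by (rule nth_lt) (use j Suc in auto)
    then have "P 0 \<le> p" using j by (auto simp: less_prod_def)
    then have "Q 0 = q" using occ_contain'[OF m_pos _ assms(1) _ assms(3)] assms(2) by auto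
    then show False using assms by simp
  qed
qed

lemma W0_L: "take (Q 0) u \<in> L"
proof -
  note o0 = occ[of 0, OF m_pos]
  have "factor u 0 (Q 0 - 1) \<in> L"
    apply (rule no_occ_L[OF sing])
    using o0 apply simp
    using o0 apply simp
  proof (intro allI impI notI)
    fix p q assume a: "0 \<le> p" "p \<le> q" "q \<le> Q 0 - 1" "factor u p q \<in> ddotL L"
    have "q < Q 0" using a(3) o0(1) by linarith
    then show False using no_before[OF a(2) _ a(4)] by blast
  qed
  moreover have "factor u 0 (Q 0 - 1) = take (Q 0) u" unfolding factor_def using o0 by simp
  ultimately show ?thesis by simp
qed

lemma W_L: assumes "Suc i < mm" shows "W i \<in> L" "W i \<noteq> []"
proof -
  note oi = occ[of i] occ[of "Suc i"] mono[OF assms]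
  have "factor u (Suc (P i)) (Q (Suc i) - 1) \<in> L"
    apply (rule no_occ_L[OF sing])
    using oi assms apply simp
    using oi assms apply simp
  proof (intro allI impI notI)
    fix p q assume a: "Suc (P i) \<le> p" "p \<le> q" "q \<le> Q (Suc i) - 1" "factor u p q \<in> ddotL L"
    have "q < Q (Suc i)" "P i < p" using a oi assms by linarith+
    then show False using no_between[OF assms _ a(2) _ a(4)] by blast
  qed
  moreover have "factor u (Suc (P i)) (Q (Suc i) - 1) = W i" unfolding factor_def W_def
    using oi assms by (simp add: Suc_diff_Suc)
  ultimately show "W i \<in> L" by simp
  then show "W i \<noteq> []" using fl unfolding factorial_lang_def by blast
qed

lemma Wl_L: "drop (Suc (P (mm - 1))) u \<in> L"
proof -
  note o = occ[of "mm - 1"] m_pos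
  have "factor u (Suc (P (mm - 1))) (length u - 1) \<in> L"
    apply (rule no_occ_L[OF sing])
    using o apply simp
    using o apply simp
  proof (intro allI impI notI)
    fix p q assume a: "Suc (P (mm - 1)) \<le> p" "p \<le> q" "q \<le> length u - 1" "factor u p q \<in> ddotL L"
    have "q < length u" "P (mm - 1) < p" using a une by (cases u; simp)+
    then show False using no_after[OF _ a(2) _ a(4)] by blast
  qed
  moreover have "factor u (Suc (P (mm - 1))) (length u - 1) = drop (Suc (P (mm - 1))) u"
    unfolding factor_def using o une by simp
  ultimately show ?thesis by simp
qed

lemma sc_eq: "sc L u = take (Q 0) u # concat (map (\<lambda>i. [D i, Wx i]) [0..<mm])"
  unfolding sc_def P_def Q_def D_def Wx_def W_def using uL by (simp add: Let_def)

lemma sc_parts: "hd (sc L u) = take (Q 0) u" "last (sc L u) = drop (Suc (P (mm - 1))) u"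
  "butlast (tl (sc L u)) = Ls (mm - 1)"
  "sc L u = take (Q 0) u # Ls (mm - 1) @ [drop (Suc (P (mm - 1))) u]"
proof -
  obtain k where k: "mm = Suc k" using m_pos by (cases mm) auto
  have m1: "map (\<lambda>i. [D i, Wx i]) [0..<k] = map (\<lambda>i. [D i, W i]) [0..<k]"
    by (rule map_cong) (auto simp: Wx_def k)
  have m2: "Wx k = drop (Suc (P k)) u" by (simp add: Wx_def k)
  have e: "sc L u = take (Q 0) u # Ls (mm - 1) @ [drop (Suc (P (mm - 1))) u]"
    unfolding sc_eq k Ls_def by (simp add: m1 m2)
  show "sc L u = take (Q 0) u # Ls (mm - 1) @ [drop (Suc (P (mm - 1))) u]" by (rule e)
  show "hd (sc L u) = take (Q 0) u" "last (sc L u) = drop (Suc (P (mm - 1))) u"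
    "butlast (tl (sc L u)) = Ls (mm - 1)" by (subst e; simp)+
qed

lemma Ls_Suc: "Ls (Suc k) = Ls k @ [W k, D (Suc k)]"
  unfolding Ls_def by simp

end


locale gctx =
  fixes L :: "'a list set" and RG :: "('b list \<times> 'b list) set"
    and rep :: "'b list \<Rightarrow> 'b list" and e :: "'b list" and f :: "'a list \<Rightarrow> 'b list"
  assumes fl: "factorial_lang L" and sing: "\<forall>a. [a] \<in> L"
    and fr: "fixed_reps RG rep" and eG: "e \<in> Gelems rep" and ide: "is_identity RG e"
    and fG: "\<forall>u \<in> L \<union> ddotL L. f u \<in> Gelems rep"
begin

definition T :: "('a + 'b) list \<Rightarrow> ('a + 'b) list \<Rightarrow> bool" (infix "\<approx>" 50) where
  "a \<approx> b \<longleftrightarrow> (a, b) \<in> pres_eq (RG_X RG \<union> Rf L f e)"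

lemma T_refl: "a \<approx> a" unfolding T_def by (rule pe_refl)
lemma T_sym: "a \<approx> b \<Longrightarrow> b \<approx> a" unfolding T_def by (rule pe_sym)
lemma T_trans[trans]: "a \<approx> b \<Longrightarrow> b \<approx> c \<Longrightarrow> a \<approx> c" unfolding T_def by (rule pe_trans)
lemma T_cong: "a \<approx> b \<Longrightarrow> x @ a @ y \<approx> x @ b @ y" unfolding T_def by (rule pe_cong)
lemma T_congL: "a \<approx> b \<Longrightarrow> x @ a \<approx> x @ b" using T_cong[of a b x "[]"] by simp
lemma T_congR: "a \<approx> b \<Longrightarrow> a @ y \<approx> b @ y" using T_cong[of a b "[]" y] by simp
lemma T_eq: "a = b \<Longrightarrow> a \<approx> b" using T_refl by simp

lemma T_grp: "(a, b) \<in> pres_eq RG \<Longrightarrow> map Inr a \<approx> map Inr b"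
  unfolding T_def by (rule pe_mono[OF _ pe_map]) auto

lemma rep_ne: "x \<noteq> [] \<Longrightarrow> rep x \<noteq> []" using fr unfolding fixed_reps_def by blast

lemma rep_T: "x \<noteq> [] \<Longrightarrow> map Inr (rep x) \<approx> map Inr x"
  using fr unfolding fixed_reps_def by (blast intro: T_grp)

lemma G_ne: "g \<in> Gelems rep \<Longrightarrow> g \<noteq> []" unfolding Gelems_def using rep_ne by auto

lemma e_ne: "e \<noteq> []" using G_ne eG .

lemma f_ne: "u \<in> L \<or> u \<in> ddotL L \<Longrightarrow> f u \<noteq> []" using fG G_ne by blast

lemma ge_T: "g \<noteq> [] \<Longrightarrow> map Inr g @ map Inr e \<approx> map Inr g"
  using ide T_grp unfolding is_identity_def by (metis map_append)

lemma eg_T: "g \<noteq> [] \<Longrightarrow> map Inr e @ map Inr g \<approx> map Inr g"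
  using ide T_grp unfolding is_identity_def by (metis map_append)

lemma egge_T: "g \<noteq> [] \<Longrightarrow> map Inr g \<approx> map Inr e @ map Inr g @ map Inr e"
proof -
  assume g: "g \<noteq> []"
  have "map Inr e @ map Inr g @ map Inr e \<approx> map Inr e @ map Inr g"
    using T_congL[OF ge_T[OF g]] by simp
  also have "\<dots> \<approx> map Inr g" using eg_T[OF g] .
  finally show ?thesis by (rule T_sym)
qed

lemma K1: "u \<in> L \<Longrightarrow> map Inr e @ map Inl u @ map Inr e \<approx> map Inr (f u)"
  unfolding T_def by (rule pe_base) (auto simp: Rf_def)

lemma K2: "v \<in> ddotL L \<Longrightarrow> map Inl v \<approx> map Inl (butlast v) @ map Inr (f v) @ map Inl (tl v)"
  unfolding T_def by (rule pe_base) (auto simp: Rf_def)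

lemma K3: assumes "g \<noteq> []" "h \<noteq> []" "u \<in> L"
  shows "map Inr g @ map Inl u @ map Inr h \<approx> map Inr g @ map Inr (f u) @ map Inr h"
proof -
  have "map Inr g @ map Inl u @ map Inr h \<approx> (map Inr g @ map Inr e) @ map Inl u @ map Inr h"
    by (rule T_congR[OF T_sym[OF ge_T[OF assms(1)]]])
  also have "\<dots> \<approx> (map Inr g @ map Inr e) @ map Inl u @ (map Inr e @ map Inr h)"
    using T_congL[OF T_sym[OF eg_T[OF assms(2)]], of "(map Inr g @ map Inr e) @ map Inl u"] by simp
  also have "\<dots> = map Inr g @ (map Inr e @ map Inl u @ map Inr e) @ map Inr h" by simp
  also have "\<dots> \<approx> map Inr g @ map Inr (f u) @ map Inr h" by (rule T_cong[OF K1[OF assms(3)]])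
  finally show ?thesis .
qed

end


lemma LG1: "a \<le> p \<Longrightarrow> p \<le> q \<Longrightarrow> q < length u \<Longrightarrow>
  drop a u = take (p - a) (drop a u) @ factor u p q @ drop (Suc q) u"
proof -
  assume a: "a \<le> p" "p \<le> q" "q < length u"
  have "drop a u = drop a (take p u @ factor u p q @ drop (Suc q) u)"
    using factor_split[OF a(2,3)] by simp
  also have "\<dots> = drop a (take p u) @ factor u p q @ drop (Suc q) u"
    using a by (simp add: drop_append)
  finally show ?thesis by (simp add: drop_take)
qed

lemma LG2: "a \<le> p \<Longrightarrow> p < q \<Longrightarrow> q < length u \<Longrightarrow>
  take (p - a) (drop a u) @ butlast (factor u p q) = take (q - a) (drop a u)"
proof -
  assume a: "a \<le> p" "p < q" "q < length u"
  have b: "butlast (factor u p q) = take (q - p) (drop p u)"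
    unfolding factor_def using a by (simp add: butlast_take)
  have "take (q - a) (drop a u) = take ((p - a) + (q - p)) (drop a u)" using a by simp
  also have "\<dots> = take (p - a) (drop a u) @ take (q - p) (drop (p - a) (drop a u))"
    by (rule take_add)
  also have "drop (p - a) (drop a u) = drop p u" using a by simp
  finally show ?thesis using b by simp
qed

lemma LG3: "p < q \<Longrightarrow> q < length u \<Longrightarrow> tl (factor u p q) @ drop (Suc q) u = drop (Suc p) u"
proof -
  assume a: "p < q" "q < length u"
  have "tl (factor u p q) = take (q - p) (drop (Suc p) u)"
    unfolding factor_def using a by (simp add: tl_take drop_Suc tl_drop)
  moreover have "drop (Suc q) u = drop (q - p) (drop (Suc p) u)" using a by simp
  ultimately show ?thesis by (metis append_take_drop_id)
qed

context gctx begin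

lemma G: assumes "a \<le> p" "p < q" "q < length u" "factor u p q \<in> ddotL L"
  shows "map Inl (drop a u) \<approx> map Inl (take (q - a) (drop a u)) @ map Inr (f (factor u p q)) @ map Inl (drop (Suc p) u)"
proof -
  have "map Inl (drop a u) = map Inl (take (p - a) (drop a u)) @ map Inl (factor u p q) @ map Inl (drop (Suc q) u)"
    using LG1[OF assms(1) less_imp_le[OF assms(2)] assms(3)] by (metis map_append)
  also have "\<dots> \<approx> map Inl (take (p - a) (drop a u)) @ (map Inl (butlast (factor u p q)) @ map Inr (f (factor u p q)) @ map Inl (tl (factor u p q))) @ map Inl (drop (Suc q) u)"
    by (rule T_cong[OF K2[OF assms(4)]])
  also have "\<dots> = map Inl (take (p - a) (drop a u) @ butlast (factor u p q)) @ map Inr (f (factor u p q)) @ map Inl (tl (factor u p q) @ drop (Suc q) u)"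
    by simp
  also have "\<dots> = map Inl (take (q - a) (drop a u)) @ map Inr (f (factor u p q)) @ map Inl (drop (Suc p) u)"
    using LG2[OF assms(1-3)] LG3[OF assms(2-3)] by simp
  finally show ?thesis .
qed

lemma decomp:
  assumes "u \<notin> L" "u \<noteq> []"
  shows "hd (sc L u) \<in> L" "last (sc L u) \<in> L" "concat (map f (butlast (tl (sc L u)))) \<noteq> []"
    "concat (map f (sc L u)) = f (hd (sc L u)) @ concat (map f (butlast (tl (sc L u)))) @ f (last (sc L u))"
    "map Inl u \<approx> map Inl (hd (sc L u)) @ map Inr (concat (map f (butlast (tl (sc L u))))) @ map Inl (last (sc L u))"
proof -
  interpret O: occ_ctx L u using fl sing assms by unfold_locales
  show "hd (sc L u) \<in> L" using O.sc_parts(1) O.W0_L by simp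
  show "last (sc L u) \<in> L" using O.sc_parts(2) O.Wl_L by simp
  have fD: "f (O.D k) \<noteq> []" if "k < O.mm" for k
    using f_ne O.occ(3)[OF that] unfolding O.D_def by blast
  have ne: "concat (map f (O.Ls k)) \<noteq> []" if "k < O.mm" for k
    using fD[OF that] unfolding O.Ls_def by simp
  show "concat (map f (butlast (tl (sc L u)))) \<noteq> []"
    using O.sc_parts(3) ne O.m_pos by simp
  show "concat (map f (sc L u)) = f (hd (sc L u)) @ concat (map f (butlast (tl (sc L u)))) @ f (last (sc L u))"
    unfolding O.sc_parts(1,2,3) by (subst O.sc_parts(4)) simp
  have claim: "k < O.mm \<longrightarrow> map Inl u \<approx> map Inl (take (O.Q 0) u) @ map Inr (concat (map f (O.Ls k))) @ map Inl (drop (Suc (O.P k)) u)" for k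
  proof (induction k)
    case 0
    show ?case
    proof
      assume k: "0 < O.mm"
      note o = O.occ[OF k]
      have "map Inl (drop 0 u) \<approx> map Inl (take (O.Q 0 - 0) (drop 0 u)) @ map Inr (f (factor u (O.P 0) (O.Q 0))) @ map Inl (drop (Suc (O.P 0)) u)"
        by (rule G[OF _ o]) simp
      then show "map Inl u \<approx> map Inl (take (O.Q 0) u) @ map Inr (concat (map f (O.Ls 0))) @ map Inl (drop (Suc (O.P 0)) u)"
        by (simp add: O.Ls_def O.D_def)
    qed
  next
    case (Suc k)
    show ?case
    proof
      assume k: "Suc k < O.mm"
      note o = O.occ[OF k] and mo = O.mono[OF k]
      have IH: "map Inl u \<approx> map Inl (take (O.Q 0) u) @ map Inr (concat (map f (O.Ls k))) @ map Inl (drop (Suc (O.P k)) u)"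
        using Suc k by simp
      have g: "map Inl (drop (Suc (O.P k)) u) \<approx> map Inl (take (O.Q (Suc k) - Suc (O.P k)) (drop (Suc (O.P k)) u)) @ map Inr (f (factor u (O.P (Suc k)) (O.Q (Suc k)))) @ map Inl (drop (Suc (O.P (Suc k))) u)"
        by (rule G[OF _ o]) (use mo in simp)
      have w: "take (O.Q (Suc k) - Suc (O.P k)) (drop (Suc (O.P k)) u) = O.W k"
        unfolding O.W_def by simp
      note IH
      also have "map Inl (take (O.Q 0) u) @ map Inr (concat (map f (O.Ls k))) @ map Inl (drop (Suc (O.P k)) u)
         \<approx> map Inl (take (O.Q 0) u) @ map Inr (concat (map f (O.Ls k))) @ (map Inl (O.W k) @ map Inr (f (O.D (Suc k))) @ map Inl (drop (Suc (O.P (Suc k))) u))"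
        using T_congL[OF g, of "map Inl (take (O.Q 0) u) @ map Inr (concat (map f (O.Ls k)))"] w
        by (simp add: O.D_def)
      also have "\<dots> = map Inl (take (O.Q 0) u) @ (map Inr (concat (map f (O.Ls k))) @ map Inl (O.W k) @ map Inr (f (O.D (Suc k)))) @ map Inl (drop (Suc (O.P (Suc k))) u)"
        by simp
      also have "\<dots> \<approx> map Inl (take (O.Q 0) u) @ (map Inr (concat (map f (O.Ls k))) @ map Inr (f (O.W k)) @ map Inr (f (O.D (Suc k)))) @ map Inl (drop (Suc (O.P (Suc k))) u)"
        by (rule T_cong[OF K3[OF ne fD O.W_L(1)[OF k]]]) (use k in simp_all)
      also have "\<dots> = map Inl (take (O.Q 0) u) @ map Inr (concat (map f (O.Ls (Suc k)))) @ map Inl (drop (Suc (O.P (Suc k))) u)"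
        by (simp add: O.Ls_Suc)
      finally show "map Inl u \<approx> map Inl (take (O.Q 0) u) @ map Inr (concat (map f (O.Ls (Suc k)))) @ map Inl (drop (Suc (O.P (Suc k))) u)" .
    qed
  qed
  show "map Inl u \<approx> map Inl (hd (sc L u)) @ map Inr (concat (map f (butlast (tl (sc L u))))) @ map Inl (last (sc L u))"
    using claim[of "O.mm - 1"] O.m_pos O.sc_parts(1-3) by simp
qed

end


lemma flatten_simps[simp]: "flatten [] = []" "flatten (Inl a # xs) = Inl a # flatten xs"
  "flatten (Inr g # xs) = map Inr g @ flatten xs" "flatten (xs @ ys) = flatten xs @ flatten ys"
  "flatten (map Inl u) = map Inl u"
  unfolding flatten_def by (simp_all, induction u) auto

context gctx begin

lemma checkA_T: assumes "u \<noteq> []" shows "map Inl u \<approx> checkA L rep f u"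
proof (cases "u \<in> L")
  case True then show ?thesis by (simp add: checkA_def T_refl)
next
  case False
  note d = decomp[OF False assms]
  have "map Inl u \<approx> map Inl (hd (sc L u)) @ map Inr (concat (map f (butlast (tl (sc L u))))) @ map Inl (last (sc L u))"
    by (rule d(5))
  also have "\<dots> \<approx> map Inl (hd (sc L u)) @ map Inr (gw L rep f u) @ map Inl (last (sc L u))"
    unfolding gw_def by (rule T_cong[OF T_sym[OF rep_T[OF d(3)]]])
  finally show ?thesis using False by (simp add: checkA_def)
qed

lemma hatf_ne: "hatf L rep e f u \<noteq> []"
proof -
  { assume "u \<noteq> []" "u \<notin> L"
    note d = decomp[OF this(2,1)]
    have "f (hd (sc L u)) \<noteq> []" using f_ne d(1) by blast
    then have "concat (map f (sc L u)) \<noteq> []" using d(4) by simp }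
  then show ?thesis unfolding hatf_def using e_ne f_ne rep_ne by auto
qed

lemma K4: assumes "u \<noteq> []" shows "map Inr e @ map Inl u @ map Inr e \<approx> map Inr (hatf L rep e f u)"
proof (cases "u \<in> L")
  case True then show ?thesis using K1 assms by (simp add: hatf_def)
next
  case False
  note d = decomp[OF False assms]
  define a where "a = hd (sc L u)"
  define b where "b = last (sc L u)"
  define M where "M = concat (map f (butlast (tl (sc L u))))"
  have M: "M \<noteq> []" using d(3) M_def by simp
  have "map Inr e @ map Inl u @ map Inr e \<approx> map Inr e @ (map Inl a @ map Inr M @ map Inl b) @ map Inr e"
    unfolding a_def b_def M_def by (rule T_cong[OF d(5)])
  also have "\<dots> = (map Inr e @ map Inl a) @ map Inr M @ (map Inl b @ map Inr e)" by simp
  also have "\<dots> \<approx> (map Inr e @ map Inl a) @ (map Inr e @ map Inr M @ map Inr e) @ (map Inl b @ map Inr e)"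
    by (rule T_cong[OF egge_T[OF M]])
  also have "\<dots> = (map Inr e @ map Inl a @ map Inr e) @ map Inr M @ (map Inr e @ map Inl b @ map Inr e)" by simp
  also have "\<dots> \<approx> map Inr (f a) @ map Inr M @ (map Inr e @ map Inl b @ map Inr e)"
    using T_congR[OF K1[OF d(1)]] a_def by simp
  also have "\<dots> \<approx> map Inr (f a) @ map Inr M @ map Inr (f b)"
    using T_congL[OF K1[OF d(2)], of "map Inr (f a) @ map Inr M"] b_def by simp
  also have "\<dots> = map Inr (concat (map f (sc L u)))" using d(4) a_def b_def M_def by simp
  also have "\<dots> \<approx> map Inr (hatf L rep e f u)"
  proof -
    have "f a \<noteq> []" using f_ne d(1) a_def by blast
    then have "concat (map f (sc L u)) \<noteq> []" using d(4) a_def by simp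
    then show ?thesis using T_sym[OF rep_T] False assms by (simp add: hatf_def)
  qed
  finally show ?thesis .
qed

lemma K5: assumes "g \<noteq> []" "h \<noteq> []" "u \<noteq> []"
  shows "map Inr g @ map Inl u @ map Inr h \<approx> map Inr g @ map Inr (hatf L rep e f u) @ map Inr h"
proof -
  have "map Inr g @ map Inl u @ map Inr h \<approx> (map Inr g @ map Inr e) @ map Inl u @ map Inr h"
    by (rule T_congR[OF T_sym[OF ge_T[OF assms(1)]]])
  also have "\<dots> \<approx> (map Inr g @ map Inr e) @ map Inl u @ (map Inr e @ map Inr h)"
    using T_congL[OF T_sym[OF eg_T[OF assms(2)]], of "(map Inr g @ map Inr e) @ map Inl u"] by simp
  also have "\<dots> = map Inr g @ (map Inr e @ map Inl u @ map Inr e) @ map Inr h" by simp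
  also have "\<dots> \<approx> map Inr g @ map Inr (hatf L rep e f u) @ map Inr h" by (rule T_cong[OF K4[OF assms(3)]])
  finally show ?thesis .
qed

lemma grave_T: assumes "g \<noteq> []"
  shows "map Inl u @ map Inr g \<approx> flatten (grave L rep f u) @ map Inr g"
proof (cases "u = [] \<or> u \<in> L")
  case True then show ?thesis by (simp add: grave_def T_refl)
next
  case False
  then have u: "u \<noteq> []" "u \<notin> L" by auto
  note d = decomp[OF u(2,1)]
  define a where "a = hd (sc L u)"
  define b where "b = last (sc L u)"
  define M where "M = concat (map f (butlast (tl (sc L u))))"
  have M: "M \<noteq> []" using d(3) M_def by simp
  have gw: "gw L rep f u = rep M" unfolding gw_def M_def ..
  have rM: "rep M \<noteq> []" using rep_ne M by simp
  have "map Inl u @ map Inr g \<approx> (map Inl a @ map Inr M @ map Inl b) @ map Inr g"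
    unfolding a_def b_def M_def by (rule T_congR[OF d(5)])
  also have "\<dots> = map Inl a @ map Inr M @ (map Inl b @ map Inr g)" by simp
  also have "\<dots> \<approx> map Inl a @ map Inr (rep M) @ (map Inl b @ map Inr g)"
    by (rule T_cong[OF T_sym[OF rep_T[OF M]]])
  also have "\<dots> \<approx> map Inl a @ (map Inr (rep M) @ map Inr e) @ (map Inl b @ map Inr g)"
    by (rule T_cong[OF T_sym[OF ge_T[OF rM]]])
  also have "\<dots> \<approx> map Inl a @ (map Inr (rep M) @ map Inr e) @ (map Inl b @ (map Inr e @ map Inr g))"
    using T_congL[OF T_sym[OF eg_T[OF assms]], of "map Inl a @ (map Inr (rep M) @ map Inr e) @ map Inl b"] by simp
  also have "\<dots> = (map Inl a @ map Inr (rep M)) @ (map Inr e @ map Inl b @ map Inr e) @ map Inr g" by simp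
  also have "\<dots> \<approx> (map Inl a @ map Inr (rep M)) @ map Inr (f b) @ map Inr g"
    by (rule T_cong[OF K1[OF d(2)[folded b_def]]])
  also have "\<dots> = map Inl a @ map Inr (rep M @ f b) @ map Inr g" by simp
  also have "\<dots> \<approx> map Inl a @ map Inr (rep (rep M @ f b)) @ map Inr g"
    by (rule T_cong[OF T_sym[OF rep_T]]) (use rM in simp)
  finally show ?thesis using u by (simp add: grave_def gw a_def b_def)
qed

lemma acute_T: assumes "g \<noteq> []"
  shows "map Inr g @ map Inl u \<approx> map Inr g @ flatten (acute L rep f u)"
proof (cases "u = [] \<or> u \<in> L")
  case True then show ?thesis by (simp add: acute_def T_refl)
next
  case False
  then have u: "u \<noteq> []" "u \<notin> L" by auto
  note d = decomp[OF u(2,1)]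
  define a where "a = hd (sc L u)"
  define b where "b = last (sc L u)"
  define M where "M = concat (map f (butlast (tl (sc L u))))"
  have M: "M \<noteq> []" using d(3) M_def by simp
  have gw: "gw L rep f u = rep M" unfolding gw_def M_def ..
  have rM: "rep M \<noteq> []" using rep_ne M by simp
  have "map Inr g @ map Inl u \<approx> map Inr g @ (map Inl a @ map Inr M @ map Inl b)"
    unfolding a_def b_def M_def by (rule T_congL[OF d(5)])
  also have "\<dots> = (map Inr g @ map Inl a) @ map Inr M @ map Inl b" by simp
  also have "\<dots> \<approx> (map Inr g @ map Inl a) @ map Inr (rep M) @ map Inl b"
    by (rule T_cong[OF T_sym[OF rep_T[OF M]]])
  also have "\<dots> \<approx> (map Inr g @ map Inl a) @ (map Inr e @ map Inr (rep M)) @ map Inl b"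
    by (rule T_cong[OF T_sym[OF eg_T[OF rM]]])
  also have "\<dots> \<approx> ((map Inr g @ map Inr e) @ map Inl a) @ (map Inr e @ map Inr (rep M)) @ map Inl b"
    using T_congR[OF T_sym[OF ge_T[OF assms]], of "map Inl a @ (map Inr e @ map Inr (rep M)) @ map Inl b"] by simp
  also have "\<dots> = map Inr g @ (map Inr e @ map Inl a @ map Inr e) @ (map Inr (rep M) @ map Inl b)" by simp
  also have "\<dots> \<approx> map Inr g @ map Inr (f a) @ (map Inr (rep M) @ map Inl b)"
    by (rule T_cong[OF K1[OF d(1)[folded a_def]]])
  also have "\<dots> = map Inr g @ map Inr (f a @ rep M) @ map Inl b" by simp
  also have "\<dots> \<approx> map Inr g @ map Inr (rep (f a @ rep M)) @ map Inl b"
    by (rule T_cong[OF T_sym[OF rep_T]]) (use rM in simp)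
  finally show ?thesis using u by (simp add: acute_def gw a_def b_def)
qed

end


definition word :: "('b list \<times> 'a list) list \<Rightarrow> ('a + 'b) list" where
  "word sg = concat (map (\<lambda>(g, u). map Inr g @ map Inl u) sg)"

fun good :: "('b list \<times> 'a list) list \<Rightarrow> bool" where
  "good [] = True"
| "good [p] = (fst p \<noteq> [])"
| "good (p # q # ps) = (fst p \<noteq> [] \<and> snd p \<noteq> [] \<and> good (q # ps))"

lemma map_Inr_projr: "map (Inr \<circ> projr) (takeWhile (Not \<circ> isl) zs) = takeWhile (Not \<circ> isl) zs"
  by (rule map_idI) (auto dest: set_takeWhileD)

lemma map_Inl_projl: "map (Inl \<circ> projl) (takeWhile isl zs) = takeWhile isl zs"
  by (rule map_idI) (auto dest: set_takeWhileD)

lemma segs_word: "word (segs ys) = ys"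
proof (induction ys rule: segs.induct)
  case 1 then show ?case by (simp add: word_def)
next
  case (2 x xs)
  define r where "r = dropWhile (Not \<circ> isl) (x # xs)"
  have "word (segs (x # xs)) = takeWhile (Not \<circ> isl) (x # xs) @ takeWhile isl r @ word (segs (dropWhile isl r))"
    by (simp only: segs.simps(2) Let_def r_def[symmetric]) (simp add: word_def map_Inr_projr map_Inl_projl del: takeWhile.simps)
  also have "\<dots> = takeWhile (Not \<circ> isl) (x # xs) @ r" using 2 r_def by (simp del: takeWhile.simps dropWhile.simps)
  also have "\<dots> = x # xs" unfolding r_def by (rule takeWhile_dropWhile_id)
  finally show ?case .
qed

lemma segs_ne: "ys \<noteq> [] \<Longrightarrow> segs ys \<noteq> []"
  by (cases ys) (auto simp: Let_def)

lemma segs_good: "ys = [] \<or> \<not> isl (hd ys) \<Longrightarrow> good (segs ys)"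
proof (induction ys rule: segs.induct)
  case 1 then show ?case by simp
next
  case (2 x xs)
  define r where "r = dropWhile (Not \<circ> isl) (x # xs)"
  define rest where "rest = dropWhile isl r"
  have x: "\<not> isl x" using 2(2) by simp
  have IH: "good (segs rest)"
    using 2(1)[OF r_def] unfolding rest_def using hd_dropWhile[of isl r] by blast
  have e: "segs (x # xs) = (map projr (takeWhile (Not \<circ> isl) (x # xs)), map projl (takeWhile isl r)) # segs rest"
    by (simp only: segs.simps(2) Let_def r_def[symmetric] rest_def[symmetric])
  have g: "map projr (takeWhile (Not \<circ> isl) (x # xs)) \<noteq> []" using x by simp
  show ?case
  proof (cases "segs rest")
    case Nil then show ?thesis using e g by simp
  next
    case (Cons q qs)
    then have "rest \<noteq> []" by auto
    then have "r \<noteq> []" unfolding rest_def by auto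
    then have "isl (hd r)" using hd_dropWhile[of "Not \<circ> isl" "x # xs"] r_def by simp
    then have "takeWhile isl r \<noteq> []" using \<open>r \<noteq> []\<close> by (cases r) auto
    then show ?thesis using e g IH Cons by simp
  qed
qed

lemma good_fst: "good sg \<Longrightarrow> p \<in> set sg \<Longrightarrow> fst p \<noteq> []"
  by (induction sg rule: good.induct) auto

context gctx begin

fun midf :: "('b list \<times> 'a list) list \<Rightarrow> ('a + 'b list) list" where
  "midf [] = []"
| "midf (p # ps) = Inr (fst p) # (if ps = [] then [] else Inr (hatf L rep e f (snd p)) # midf ps)"

lemma mid_eq: "concat (map (\<lambda>i. [Inr (fst (sg ! i))] @ (if Suc i < length sg then [Inr (hatf L rep e f (snd (sg ! i)))] else [])) [0..<length sg]) = midf sg"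
proof (induction sg)
  case Nil then show ?case by simp
next
  case (Cons p ps)
  show ?case by (simp only: length_Cons map_upt_Suc nth_Cons_Suc nth_Cons_0 Suc_less_eq) (use Cons in auto)
qed

lemma merge_cons: "\<not> (\<exists>g h ys. x # xs = Inr g # Inr h # ys) \<Longrightarrow> merge rep (x # xs) = x # merge rep xs"
proof (cases x)
  case (Inl a) then show ?thesis by simp
next
  case (Inr g)
  assume n: "\<not> (\<exists>g h ys. x # xs = Inr g # Inr h # ys)"
  show ?thesis
  proof (cases xs)
    case Nil then show ?thesis using Inr by simp
  next
    case (Cons y zs)
    then show ?thesis using Inr n by (cases y) auto
  qed
qed

lemma merge_T: "(\<forall>g. Inr g \<in> set xs \<longrightarrow> g \<noteq> []) \<Longrightarrow> flatten xs \<approx> flatten (merge rep xs)"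
proof (induction xs rule: length_induct)
  case (1 xs)
  show ?case
  proof (cases "\<exists>g h ys. xs = Inr g # Inr h # ys")
    case True
    then obtain g h ys where xs: "xs = Inr g # Inr h # ys" by blast
    have gh: "g @ h \<noteq> []" using 1(2) xs by simp
    have IH: "flatten (Inr (rep (g @ h)) # ys) \<approx> flatten (merge rep (Inr (rep (g @ h)) # ys))"
    proof -
      have pre: "\<forall>g'. Inr g' \<in> set (Inr (rep (g @ h)) # ys) \<longrightarrow> g' \<noteq> []"
        using 1(2) xs rep_ne[OF gh] by auto
      have "length (Inr (rep (g @ h)) # ys) < length xs" using xs by simp
      then show ?thesis using 1(1) pre by blast
    qed
    have "flatten xs = map Inr (g @ h) @ flatten ys" using xs by simp
    also have "\<dots> \<approx> map Inr (rep (g @ h)) @ flatten ys" by (rule T_congR[OF T_sym[OF rep_T[OF gh]]])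
    also have "\<dots> = flatten (Inr (rep (g @ h)) # ys)" by simp
    also have "\<dots> \<approx> flatten (merge rep (Inr (rep (g @ h)) # ys))" by (rule IH)
    also have "\<dots> = flatten (merge rep xs)" using xs by simp
    finally show ?thesis .
  next
    case False
    show ?thesis
    proof (cases xs)
      case Nil then show ?thesis by (simp add: T_refl)
    next
      case (Cons x ys)
      have m: "merge rep xs = x # merge rep ys" using merge_cons False Cons by blast
      have IH: "flatten ys \<approx> flatten (merge rep ys)"
        using 1(1)[rule_format, of ys] 1(2) Cons by auto
      have "flatten xs = flatten [x] @ flatten ys" using Cons by (simp add: flatten_def)
      also have "\<dots> \<approx> flatten [x] @ flatten (merge rep ys)" by (rule T_congL[OF IH])
      also have "\<dots> = flatten (merge rep xs)" using m by (simp add: flatten_def)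
      finally show ?thesis .
    qed
  qed
qed

end


context gctx begin

lemma flatten_midf: "flatten (midf (p # ps)) = map Inr (fst p) @ (if ps = [] then [] else map Inr (hatf L rep e f (snd p)) @ flatten (midf ps))"
  by simp

lemma mid_T: "good sg \<Longrightarrow> sg \<noteq> [] \<Longrightarrow> word sg \<approx> flatten (midf sg) @ flatten (acute L rep f (snd (last sg)))"
proof (induction sg)
  case Nil then show ?case by simp
next
  case (Cons p ps)
  obtain g u where p: "p = (g, u)" by (cases p)
  show ?case
  proof (cases ps)
    case Nil
    have g: "g \<noteq> []" using Cons(2) Nil p by simp
    show ?thesis using acute_T[OF g, of u] Nil p by (simp add: word_def)
  next
    case (Cons q qs)
    have gu: "g \<noteq> []" "u \<noteq> []" "good ps" using Cons.prems(1) \<open>ps = q # qs\<close> p by auto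
    have q: "fst q \<noteq> []" using gu(3) \<open>ps = q # qs\<close> by (cases qs) auto
    define A where "A = flatten (acute L rep f (snd (last ps)))"
    define R where "R = (if qs = [] then [] else map Inr (hatf L rep e f (snd q)) @ flatten (midf qs))"
    have IH: "word ps \<approx> flatten (midf ps) @ A" using Cons.IH gu(3) \<open>ps = q # qs\<close> A_def by simp
    have "word (p # ps) = map Inr g @ map Inl u @ word ps" using p by (simp add: word_def)
    also have "\<dots> \<approx> map Inr g @ map Inl u @ (flatten (midf ps) @ A)"
      using T_congL[OF IH, of "map Inr g @ map Inl u"] by simp
    also have "\<dots> = map Inr g @ map Inl u @ map Inr (fst q) @ (R @ A)"
      using \<open>ps = q # qs\<close> R_def by simp
    also have "\<dots> \<approx> map Inr g @ map Inr (hatf L rep e f u) @ map Inr (fst q) @ (R @ A)"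
      using T_congR[OF K5[OF gu(1) q gu(2)], of "R @ A"] by simp
    also have "\<dots> = flatten (midf (p # ps)) @ flatten (acute L rep f (snd (last (p # ps))))"
      using \<open>ps = q # qs\<close> R_def A_def p by simp
    finally show ?thesis .
  qed
qed

lemma grave_ne: "Inr g \<in> set (grave L rep f u) \<Longrightarrow> g \<noteq> []"
proof -
  assume a: "Inr g \<in> set (grave L rep f u)"
  show ?thesis
  proof (cases "u = [] \<or> u \<in> L")
    case True then show ?thesis using a by (auto simp: grave_def)
  next
    case False
    then have "f (last (sc L u)) \<noteq> []" using decomp(2)[of u] f_ne by blast
    moreover have "grave L rep f u = map Inl (hd (sc L u)) @ [Inr (rep (gw L rep f u @ f (last (sc L u))))]"
      using False unfolding grave_def by simp
    then have "g = rep (gw L rep f u @ f (last (sc L u)))" using a by auto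
    ultimately show ?thesis using rep_ne by simp
  qed
qed

lemma acute_ne: "Inr g \<in> set (acute L rep f u) \<Longrightarrow> g \<noteq> []"
proof -
  assume a: "Inr g \<in> set (acute L rep f u)"
  show ?thesis
  proof (cases "u = [] \<or> u \<in> L")
    case True then show ?thesis using a by (auto simp: acute_def)
  next
    case False
    then have "f (hd (sc L u)) \<noteq> []" using decomp(1)[of u] f_ne by blast
    moreover have "acute L rep f u = [Inr (rep (f (hd (sc L u)) @ gw L rep f u))] @ map Inl (last (sc L u))"
      using False unfolding acute_def by simp
    then have "g = rep (f (hd (sc L u)) @ gw L rep f u)" using a by auto
    ultimately show ?thesis using rep_ne by simp
  qed
qed

lemma midf_ne: "good sg \<Longrightarrow> Inr g \<in> set (midf sg) \<Longrightarrow> g \<noteq> []"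
proof (induction sg)
  case Nil then show ?case by simp
next
  case (Cons p ps)
  have gp: "good ps" using Cons.prems(1) by (cases ps) auto
  have fp: "fst p \<noteq> []" using Cons.prems(1) by (cases ps) auto
  have h: "hatf L rep e f (snd p) \<noteq> []" by (rule hatf_ne)
  show ?case using Cons.prems(2) Cons.IH[OF gp] fp h by (auto split: if_splits)
qed

lemma main: assumes "w \<noteq> []" shows "w \<approx> checkX L rep e f w"
proof (cases "\<forall>x\<in>set w. isl x")
  case True
  have w: "w = map Inl (map projl w)" using True by (simp add: map_idI)
  have "map projl w \<noteq> []" using assms by simp
  then have "map Inl (map projl w) \<approx> checkA L rep f (map projl w)" by (rule checkA_T)
  then show ?thesis using True w by (simp add: checkX_def)
next
  case False
  define u0 where "u0 = map projl (takeWhile isl w)"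
  define ys where "ys = dropWhile isl w"
  define sg where "sg = segs ys"
  have ys: "ys \<noteq> []" using False ys_def by auto
  have hy: "\<not> isl (hd ys)" using hd_dropWhile[of isl w] ys ys_def by simp
  have gs: "good sg" unfolding sg_def by (rule segs_good) (use hy in simp)
  have sgn: "sg \<noteq> []" unfolding sg_def by (rule segs_ne[OF ys])
  obtain p ps where sp: "sg = p # ps" using sgn by (cases sg) auto
  have fp: "fst p \<noteq> []" using good_fst[OF gs, of p] sp by simp
  define A where "A = flatten (acute L rep f (snd (last sg)))"
  define R where "R = (if ps = [] then [] else map Inr (hatf L rep e f (snd p)) @ flatten (midf ps))"
  have "w = map Inl u0 @ word sg"
    unfolding u0_def sg_def ys_def segs_word by (simp add: map_Inl_projl)
  also have "\<dots> \<approx> map Inl u0 @ (flatten (midf sg) @ A)"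
    unfolding A_def by (rule T_congL[OF mid_T[OF gs sgn]])
  also have "\<dots> = (map Inl u0 @ map Inr (fst p)) @ (R @ A)" using sp R_def by simp
  also have "\<dots> \<approx> (flatten (grave L rep f u0) @ map Inr (fst p)) @ (R @ A)"
    by (rule T_congR[OF grave_T[OF fp]])
  also have "\<dots> = flatten (grave L rep f u0 @ midf sg @ acute L rep f (snd (last sg)))"
    using sp R_def A_def by simp
  also have "\<dots> \<approx> flatten (merge rep (grave L rep f u0 @ midf sg @ acute L rep f (snd (last sg))))"
    by (rule merge_T) (use grave_ne midf_ne[OF gs] acute_ne in auto)
  also have "\<dots> = checkX L rep e f w"
    unfolding checkX_def if_not_P[OF False] Let_def u0_def[symmetric] ys_def[symmetric] sg_def[symmetric] mid_eq
    by (rule refl)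
  finally show ?thesis .
qed

end

theorem lemma2:
  fixes L :: "'a list set" and RG :: "('b list \<times> 'b list) set"
    and rep :: "'b list \<Rightarrow> 'b list" and e :: "'b list"
    and f :: "'a list \<Rightarrow> 'b list" and w :: "('a + 'b) list"
  assumes "L \<noteq> {}" and "factorial_lang L" and "\<forall>a. [a] \<in> L"
    and "group_presentation RG" and "fixed_reps RG rep"
    and "e \<in> Gelems rep" and "is_identity RG e"
    and "\<forall>u \<in> L \<union> ddotL L. f u \<in> Gelems rep"
    and "w \<noteq> []"
  shows "(w, checkX L rep e f w) \<in> pres_eq (RG_X RG \<union> Rf L f e)"
proof -
  interpret gctx L RG rep e f
    using assms by unfold_locales auto
  show ?thesis using main[OF assms(9)] unfolding T_def .
qed


end
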